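(* Let $H,A$ be as in the context and let $\alpha\in A$ be a non-trivial element invariant under the adjoint coaction, i.e. $\alpha_{(1)}S\alpha_{(3)}\otimes\alpha_{(2)}=1\otimes\alpha$. Then each of the following subspaces of $\ker\epsilon\subset H$ is stable under the quantum double action $h\triangleright x=h_{(1)}xSh_{(2)}$, $a\triangleright x=\langle a,x_{(1)}\rangle x_{(2)}-\langle a,x\rangle1$: \[L_\alpha=\{x\in\ker\epsilon\mid x_{(1)}\langle x_{(2)},\alpha\rangle=x\,\epsilon(\alpha)\},\] \[\widetilde{L_\alpha}=\{x\in\ker\epsilon\mid \langle x,a\alpha\rangle=\langle x,a\rangle\epsilon(\alpha)\ \forall a\in\ker\epsilon\subset A\},\] \[L_{\alpha,1}=\{x\in\ker\epsilon\mid \langle x,a\alpha\rangle=\langle x,a\rangle(\epsilon(\alpha)+1)\ \forall a\in\ker\epsilon\subset A\}.\] Moreover $L_\alpha$ is the quantum tangent space (annihilator in $\ker\epsilon\subset H$) of the bicovariant calculus obtained by quotienting $\ker\epsilon\subset A$ by $\{a\alpha-a\epsilon(\alpha)\mid a\in A\}$ (inner type-I), and $L_{\alpha,1}$ is that of the calculus obtained by quotienting $\ker\epsilon\subset A$ by $(\ker\epsilon)\cdot(\alpha-(\epsilon(\alpha)+1))$ (inner type-II).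
   Context: $H,A$ are Hopf algebras over $\mathbb{C}$ with invertible antipodes, non-degenerately paired by a Hopf pairing $\langle\ ,\ \rangle$ ($\langle hg,a\rangle=\langle h,a_{(1)}\rangle\langle g,a_{(2)}\rangle$, $\langle h,ab\rangle=\langle h_{(1)},a\rangle\langle h_{(2)},b\rangle$); Sweedler notation. The quantum tangent space of a bicovariant calculus defined by a quotienting subspace $M\subseteq\ker\epsilon\subset A$ (stable under left multiplication and the coaction $v\mapsto v_{(1)}Sv_{(3)}\otimes v_{(2)}$) is $\{x\in\ker\epsilon\subset H\mid\langle x,m\rangle=0\ \forall m\in M\}$. *)

theory Defs
  imports Complex_Main
begin

text \<open>Elements of a tensor product V (x) W are represented by finite lists of simple tensors
(Sweedler sums).  Two representatives are equal as tensors iff all bilinear functionals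
V x W -> C agree on them (bilinear functionals separate points of V (x) W).\<close>

definition is_alg :: "(complex \<Rightarrow> 'x::ring_1 \<Rightarrow> 'x) \<Rightarrow> bool" where
  "is_alg sm \<longleftrightarrow> vector_space sm \<and>
     (\<forall>c x y. sm c (x * y) = sm c x * y \<and> sm c (x * y) = x * sm c y)"

definition lin_fun :: "(complex \<Rightarrow> 'x::ab_group_add \<Rightarrow> 'x) \<Rightarrow> ('x \<Rightarrow> complex) \<Rightarrow> bool" where
  "lin_fun sm f \<longleftrightarrow> (\<forall>x y. f (x + y) = f x + f y) \<and> (\<forall>c x. f (sm c x) = c * f x)"

definition lin_map :: "(complex \<Rightarrow> 'x::ab_group_add \<Rightarrow> 'x) \<Rightarrow> (complex \<Rightarrow> 'y::ab_group_add \<Rightarrow> 'y)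
    \<Rightarrow> ('x \<Rightarrow> 'y) \<Rightarrow> bool" where
  "lin_map smx smy f \<longleftrightarrow> (\<forall>x y. f (x + y) = f x + f y) \<and> (\<forall>c x. f (smx c x) = smy c (f x))"

definition bilin :: "(complex \<Rightarrow> 'x::ab_group_add \<Rightarrow> 'x) \<Rightarrow> (complex \<Rightarrow> 'y::ab_group_add \<Rightarrow> 'y)
    \<Rightarrow> ('x \<Rightarrow> 'y \<Rightarrow> complex) \<Rightarrow> bool" where
  "bilin smx smy f \<longleftrightarrow> (\<forall>y. lin_fun smx (\<lambda>x. f x y)) \<and> (\<forall>x. lin_fun smy (f x))"

definition trilin :: "(complex \<Rightarrow> 'x::ab_group_add \<Rightarrow> 'x) \<Rightarrow> ('x \<Rightarrow> 'x \<Rightarrow> 'x \<Rightarrow> complex) \<Rightarrow> bool" where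
  "trilin sm f \<longleftrightarrow> (\<forall>y z. lin_fun sm (\<lambda>x. f x y z)) \<and> (\<forall>x z. lin_fun sm (\<lambda>y. f x y z))
      \<and> (\<forall>x y. lin_fun sm (f x y))"

definition tsum2 :: "('x \<Rightarrow> 'y \<Rightarrow> 'z::comm_monoid_add) \<Rightarrow> ('x \<times> 'y) list \<Rightarrow> 'z" where
  "tsum2 f r = sum_list (map (\<lambda>(x, y). f x y) r)"

definition tsum3 :: "('x \<Rightarrow> 'y \<Rightarrow> 'w \<Rightarrow> 'z::comm_monoid_add) \<Rightarrow> ('x \<times> 'y \<times> 'w) list \<Rightarrow> 'z" where
  "tsum3 f r = sum_list (map (\<lambda>(x, y, w). f x y w) r)"

definition teq2 :: "(complex \<Rightarrow> 'x::ab_group_add \<Rightarrow> 'x) \<Rightarrow> (complex \<Rightarrow> 'y::ab_group_add \<Rightarrow> 'y)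
    \<Rightarrow> ('x \<times> 'y) list \<Rightarrow> ('x \<times> 'y) list \<Rightarrow> bool" where
  "teq2 smx smy r s \<longleftrightarrow> (\<forall>f. bilin smx smy f \<longrightarrow> tsum2 f r = tsum2 f s)"

definition teq3 :: "(complex \<Rightarrow> 'x::ab_group_add \<Rightarrow> 'x)
    \<Rightarrow> ('x \<times> 'x \<times> 'x) list \<Rightarrow> ('x \<times> 'x \<times> 'x) list \<Rightarrow> bool" where
  "teq3 sm r s \<longleftrightarrow> (\<forall>f. trilin sm f \<longrightarrow> tsum3 f r = tsum3 f s)"

text \<open>Membership of a tensor in X (x) M for a subspace M of Y.\<close>
definition in_tensor_right :: "(complex \<Rightarrow> 'x::ab_group_add \<Rightarrow> 'x) \<Rightarrow> (complex \<Rightarrow> 'y::ab_group_add \<Rightarrow> 'y)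
    \<Rightarrow> 'y set \<Rightarrow> ('x \<times> 'y) list \<Rightarrow> bool" where
  "in_tensor_right smx smy M t \<longleftrightarrow>
     (\<forall>f. bilin smx smy f \<and> (\<forall>x. \<forall>m\<in>M. f x m = 0) \<longrightarrow> tsum2 f t = 0)"

definition cop2L :: "('x \<Rightarrow> ('x \<times> 'x) list) \<Rightarrow> 'x \<Rightarrow> ('x \<times> 'x \<times> 'x) list" where
  "cop2L cop h = concat (map (\<lambda>(a, b). map (\<lambda>(c, d). (c, d, b)) (cop a)) (cop h))"

definition cop2R :: "('x \<Rightarrow> ('x \<times> 'x) list) \<Rightarrow> 'x \<Rightarrow> ('x \<times> 'x \<times> 'x) list" where
  "cop2R cop h = concat (map (\<lambda>(a, b). map (\<lambda>(c, d). (a, c, d)) (cop b)) (cop h))"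

definition hopf_alg :: "(complex \<Rightarrow> 'x::ring_1 \<Rightarrow> 'x) \<Rightarrow> ('x \<Rightarrow> ('x \<times> 'x) list)
    \<Rightarrow> ('x \<Rightarrow> complex) \<Rightarrow> ('x \<Rightarrow> 'x) \<Rightarrow> bool" where
  "hopf_alg sm cop eps S \<longleftrightarrow>
     is_alg sm \<and>
     \<comment> \<open>coproduct linear\<close>
     (\<forall>x y. teq2 sm sm (cop (x + y)) (cop x @ cop y)) \<and>
     (\<forall>c x. teq2 sm sm (cop (sm c x)) (map (\<lambda>(a, b). (sm c a, b)) (cop x))) \<and>
     \<comment> \<open>coassociativity\<close>
     (\<forall>h. teq3 sm (cop2L cop h) (cop2R cop h)) \<and>
     \<comment> \<open>counit\<close>
     lin_fun sm eps \<and>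
     (\<forall>h. tsum2 (\<lambda>a b. sm (eps a) b) (cop h) = h) \<and>
     (\<forall>h. tsum2 (\<lambda>a b. sm (eps b) a) (cop h) = h) \<and>
     \<comment> \<open>coproduct and counit are algebra maps\<close>
     (\<forall>x y. teq2 sm sm (cop (x * y))
        (concat (map (\<lambda>(a, b). map (\<lambda>(c, d). (a * c, b * d)) (cop y)) (cop x)))) \<and>
     teq2 sm sm (cop 1) [(1, 1)] \<and>
     (\<forall>x y. eps (x * y) = eps x * eps y) \<and> eps 1 = 1 \<and>
     \<comment> \<open>antipode\<close>
     lin_map sm sm S \<and>
     (\<forall>h. tsum2 (\<lambda>a b. S a * b) (cop h) = sm (eps h) 1) \<and>
     (\<forall>h. tsum2 (\<lambda>a b. a * S b) (cop h) = sm (eps h) 1) \<and>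
     bij S"

definition hopf_pairing :: "(complex \<Rightarrow> 'h::ring_1 \<Rightarrow> 'h) \<Rightarrow> ('h \<Rightarrow> ('h \<times> 'h) list) \<Rightarrow> ('h \<Rightarrow> complex)
    \<Rightarrow> (complex \<Rightarrow> 'a::ring_1 \<Rightarrow> 'a) \<Rightarrow> ('a \<Rightarrow> ('a \<times> 'a) list) \<Rightarrow> ('a \<Rightarrow> complex)
    \<Rightarrow> ('h \<Rightarrow> 'a \<Rightarrow> complex) \<Rightarrow> bool" where
  "hopf_pairing smH copH epsH smA copA epsA pr \<longleftrightarrow>
     bilin smH smA pr \<and>
     (\<forall>h g a. pr (h * g) a = tsum2 (\<lambda>a1 a2. pr h a1 * pr g a2) (copA a)) \<and>
     (\<forall>h a b. pr h (a * b) = tsum2 (\<lambda>h1 h2. pr h1 a * pr h2 b) (copH h)) \<and>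
     (\<forall>a. pr 1 a = epsA a) \<and> (\<forall>h. pr h 1 = epsH h) \<and>
     (\<forall>h. (\<forall>a. pr h a = 0) \<longrightarrow> h = 0) \<and>
     (\<forall>a. (\<forall>h. pr h a = 0) \<longrightarrow> a = 0)"

definition adcoact :: "('a::ring_1 \<Rightarrow> ('a \<times> 'a) list) \<Rightarrow> ('a \<Rightarrow> 'a) \<Rightarrow> 'a \<Rightarrow> ('a \<times> 'a) list" where
  "adcoact cop S v = map (\<lambda>(b, c, d). (b * S d, c)) (cop2L cop v)"

definition actH :: "('h::ring_1 \<Rightarrow> ('h \<times> 'h) list) \<Rightarrow> ('h \<Rightarrow> 'h) \<Rightarrow> 'h \<Rightarrow> 'h \<Rightarrow> 'h" where
  "actH copH SH h x = tsum2 (\<lambda>h1 h2. h1 * x * SH h2) (copH h)"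

definition actA :: "(complex \<Rightarrow> 'h::ring_1 \<Rightarrow> 'h) \<Rightarrow> ('h \<Rightarrow> ('h \<times> 'h) list)
    \<Rightarrow> ('h \<Rightarrow> 'a \<Rightarrow> complex) \<Rightarrow> 'a \<Rightarrow> 'h \<Rightarrow> 'h" where
  "actA smH copH pr a x = tsum2 (\<lambda>x1 x2. smH (pr x1 a) x2) (copH x) - smH (pr x a) 1"

definition double_stable :: "(complex \<Rightarrow> 'h::ring_1 \<Rightarrow> 'h) \<Rightarrow> ('h \<Rightarrow> ('h \<times> 'h) list) \<Rightarrow> ('h \<Rightarrow> 'h)
    \<Rightarrow> ('h \<Rightarrow> 'a \<Rightarrow> complex) \<Rightarrow> 'h set \<Rightarrow> bool" where
  "double_stable smH copH SH pr L \<longleftrightarrow>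
     (\<forall>h. \<forall>x\<in>L. actH copH SH h x \<in> L) \<and> (\<forall>a. \<forall>x\<in>L. actA smH copH pr a x \<in> L)"

definition bicov_quot :: "(complex \<Rightarrow> 'a::ring_1 \<Rightarrow> 'a) \<Rightarrow> ('a \<Rightarrow> ('a \<times> 'a) list) \<Rightarrow> ('a \<Rightarrow> complex)
    \<Rightarrow> ('a \<Rightarrow> 'a) \<Rightarrow> 'a set \<Rightarrow> bool" where
  "bicov_quot smA copA epsA SA M \<longleftrightarrow>
     0 \<in> M \<and> (\<forall>x\<in>M. \<forall>y\<in>M. x + y \<in> M) \<and> (\<forall>c. \<forall>x\<in>M. smA c x \<in> M) \<and>
     M \<subseteq> {a. epsA a = 0} \<and>
     (\<forall>a. \<forall>m\<in>M. a * m \<in> M) \<and>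
     (\<forall>m\<in>M. in_tensor_right smA smA M (adcoact copA SA m))"

definition qtangent :: "('h::ring_1 \<Rightarrow> complex) \<Rightarrow> ('h \<Rightarrow> 'a \<Rightarrow> complex) \<Rightarrow> 'a set \<Rightarrow> 'h set" where
  "qtangent epsH pr M = {x. epsH x = 0 \<and> (\<forall>m\<in>M. pr x m = 0)}"

definition L_alpha :: "(complex \<Rightarrow> 'h::ring_1 \<Rightarrow> 'h) \<Rightarrow> ('h \<Rightarrow> ('h \<times> 'h) list) \<Rightarrow> ('h \<Rightarrow> complex)
    \<Rightarrow> ('a \<Rightarrow> complex) \<Rightarrow> ('h \<Rightarrow> 'a \<Rightarrow> complex) \<Rightarrow> 'a \<Rightarrow> 'h set" where
  "L_alpha smH copH epsH epsA pr \<alpha> =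
     {x. epsH x = 0 \<and> tsum2 (\<lambda>x1 x2. smH (pr x2 \<alpha>) x1) (copH x) = smH (epsA \<alpha>) x}"

definition L_alpha_tilde :: "('h::ring_1 \<Rightarrow> complex) \<Rightarrow> ('a::ring_1 \<Rightarrow> complex)
    \<Rightarrow> ('h \<Rightarrow> 'a \<Rightarrow> complex) \<Rightarrow> 'a \<Rightarrow> 'h set" where
  "L_alpha_tilde epsH epsA pr \<alpha> =
     {x. epsH x = 0 \<and> (\<forall>a. epsA a = 0 \<longrightarrow> pr x (a * \<alpha>) = pr x a * epsA \<alpha>)}"

definition L_alpha_1 :: "('h::ring_1 \<Rightarrow> complex) \<Rightarrow> ('a::ring_1 \<Rightarrow> complex)
    \<Rightarrow> ('h \<Rightarrow> 'a \<Rightarrow> complex) \<Rightarrow> 'a \<Rightarrow> 'h set" where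
  "L_alpha_1 epsH epsA pr \<alpha> =
     {x. epsH x = 0 \<and> (\<forall>a. epsA a = 0 \<longrightarrow> pr x (a * \<alpha>) = pr x a * (epsA \<alpha> + 1))}"

end

theory Submission
  imports Defs
begin

section \<open>Generic list sums\<close>

lemma tsum2_Nil[simp]: "tsum2 f [] = 0"
  by (simp add: tsum2_def)
lemma tsum2_Cons[simp]: "tsum2 f (p # l) = f (fst p) (snd p) + tsum2 f l"
  by (simp add: tsum2_def split_beta)
lemma tsum2_append[simp]: "tsum2 f (l1 @ l2) = tsum2 f l1 + tsum2 f l2"
  by (simp add: tsum2_def)
lemma tsum2_add: "tsum2 (\<lambda>a b. f a b + g a b) l = tsum2 f l + tsum2 g l"
  by (induction l) (auto simp: algebra_simps)
lemma tsum2_diff: "tsum2 (\<lambda>a b. (f a b :: 'z::ab_group_add) - g a b) l = tsum2 f l - tsum2 g l"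
  by (induction l) (auto simp: algebra_simps)
lemma tsum2_zero[simp]: "tsum2 (\<lambda>a b. 0) l = 0"
  by (induction l) auto
lemma tsum2_cmult: "tsum2 (\<lambda>a b. (c::'z::semiring_0) * f a b) l = c * tsum2 f l"
  by (induction l) (auto simp: algebra_simps)
lemma tsum2_multc: "tsum2 (\<lambda>a b. (f a b::'z::semiring_0) * c) l = tsum2 f l * c"
  by (induction l) (auto simp: algebra_simps)
lemma tsum2_swap: "tsum2 (\<lambda>a b. tsum2 (\<lambda>c d. f a b c d) l2) l1
   = tsum2 (\<lambda>c d. tsum2 (\<lambda>a b. f a b c d) l1) l2"
proof (induction l1)
  case Nil then show ?case by simp
next
  case (Cons p l1) then show ?case by (simp add: tsum2_add)
qed
lemma tsum2_hom: "(\<And>x y. L (x+y) = L x + L y) \<Longrightarrow> L 0 = 0 \<Longrightarrow> L (tsum2 f l) = tsum2 (\<lambda>a b. L (f a b)) l"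
  by (induction l) auto

lemma tsum3_map_L: "tsum3 t (map (\<lambda>(c, d). (c, d, b)) m) = tsum2 (\<lambda>c d. t c d b) m"
  by (induction m) (auto simp: tsum3_def tsum2_def)
lemma tsum3_map_R: "tsum3 t (map (\<lambda>(c, d). (a, c, d)) m) = tsum2 (\<lambda>c d. t a c d) m"
  by (induction m) (auto simp: tsum3_def tsum2_def)
lemma tsum3_map_Pair: "tsum3 t (map (Pair a) m) = tsum2 (t a) m"
  by (induction m) (auto simp: tsum3_def tsum2_def)
lemma tsum3_concat: "tsum3 t (concat ls) = sum_list (map (tsum3 t) ls)"
  by (induction ls) (auto simp: tsum3_def)
lemma tsum2_concat: "tsum2 t (concat ls) = sum_list (map (tsum2 t) ls)"
  by (induction ls) (auto)
lemma tsum2_map_prod: "tsum2 f (map (\<lambda>(c, d). (a * c, b * d)) m) = tsum2 (\<lambda>c d. f (a * c) (b * d)) m"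
  by (induction m) (auto simp: tsum2_def)

lemma tsum3_cop2L: "tsum3 t (concat (map (\<lambda>(a, b). map (\<lambda>(c, d). (c, d, b)) (cop a)) l))
   = tsum2 (\<lambda>a b. tsum2 (\<lambda>c d. t c d b) (cop a)) l"
  unfolding tsum3_concat by (induction l) (auto simp: tsum3_map_L)

lemma tsum3_cop2R: "tsum3 t (concat (map (\<lambda>(a, b). map (\<lambda>(c, d). (a, c, d)) (cop b)) l))
   = tsum2 (\<lambda>a b. tsum2 (\<lambda>c d. t a c d) (cop b)) l"
  unfolding tsum3_concat by (induction l) (auto simp: tsum3_map_R tsum3_map_Pair)

lemma tsum3_cop2R': "tsum3 t (concat (map (\<lambda>(a, b). map (Pair a) (cop b)) l))
   = tsum2 (\<lambda>a b. tsum2 (\<lambda>c d. t a c d) (cop b)) l"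
  using tsum3_cop2R[of t cop l] by simp

lemma tsum2_concat_prod: "tsum2 f (concat (map (\<lambda>(a, b). map (\<lambda>(c, d). (a * c, b * d)) m) l))
   = tsum2 (\<lambda>a b. tsum2 (\<lambda>c d. f (a * c) (b * d)) m) l"
  unfolding tsum2_concat by (induction l) (auto simp: tsum2_map_prod)

lemma tsum2_map_sm: "tsum2 f (map (\<lambda>(a, b). (g a, b)) l) = tsum2 (\<lambda>a b. f (g a) b) l"
  by (induction l) (auto simp: split_beta)

lemma lin_funD: "lin_fun sm f \<Longrightarrow> f (x + y) = f x + f y" "lin_fun sm f \<Longrightarrow> f (sm c x) = c * f x"
  by (auto simp: lin_fun_def)
lemma lin_mapD: "lin_map sm sm' f \<Longrightarrow> f (x + y) = f x + f y" "lin_map sm sm' f \<Longrightarrow> f (sm c x) = sm' c (f x)"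
  by (auto simp: lin_map_def)
lemma additive_0: fixes f :: "'a::ab_group_add \<Rightarrow> 'b::ab_group_add"
  shows "(\<And>x y. f (x + y) = f x + f y) \<Longrightarrow> f 0 = 0"
proof -
  assume h: "\<And>x y. f (x + y) = f x + f y"
  have "f (0 + 0) = f 0 + f 0" by (rule h)
  then show ?thesis by simp
qed
lemma additive_minus: fixes f :: "'a::ab_group_add \<Rightarrow> 'b::ab_group_add"
  shows "(\<And>x y. f (x + y) = f x + f y) \<Longrightarrow> f (- x) = - (f x)"
proof -
  assume h: "\<And>x y. f (x + y) = f x + f y"
  have "f (x + - x) = f x + f (- x)" by (rule h)
  then have "0 = f x + f (- x)" using additive_0[of f, OF h] by simp
  then show ?thesis by (simp add: eq_neg_iff_add_eq_0 add.commute)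
qed
lemma additive_diff: fixes f :: "'a::ab_group_add \<Rightarrow> 'b::ab_group_add"
  shows "(\<And>x y. f (x + y) = f x + f y) \<Longrightarrow> f (x - y) = f x - f y"
proof -
  assume h: "\<And>x y. f (x + y) = f x + f y"
  show ?thesis using h[of x "- y"] additive_minus[of f y, OF h] by simp
qed


section \<open>Hopf algebra with a separating family of functionals\<close>

locale hopf =
  fixes sm :: "complex \<Rightarrow> 'x::ring_1 \<Rightarrow> 'x" and cop :: "'x \<Rightarrow> ('x \<times> 'x) list"
    and eps :: "'x \<Rightarrow> complex" and S :: "'x \<Rightarrow> 'x" and \<phi> :: "'i \<Rightarrow> 'x \<Rightarrow> complex"
  assumes hopf: "hopf_alg sm cop eps S"
    and phi_lin: "lin_fun sm (\<phi> i)"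
    and phi_sep: "(\<And>i. \<phi> i x = 0) \<Longrightarrow> x = 0"
begin

lemma vs: "vector_space sm" using hopf by (simp add: hopf_alg_def is_alg_def)

sublocale vs: vector_space sm by (rule vs)

lemma sm_mult_left[simp]: "sm c x * y = sm c (x * y)"
  using hopf by (simp add: hopf_alg_def is_alg_def)
lemma sm_mult_right[simp]: "x * sm c y = sm c (x * y)"
  using hopf by (simp add: hopf_alg_def is_alg_def)

lemma cop_add: "teq2 sm sm (cop (x + y)) (cop x @ cop y)"
  using hopf by (simp add: hopf_alg_def)
lemma cop_sm: "teq2 sm sm (cop (sm c x)) (map (\<lambda>(a, b). (sm c a, b)) (cop x))"
  using hopf by (simp add: hopf_alg_def)
lemma coassoc: "teq3 sm (cop2L cop h) (cop2R cop h)"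
  using hopf by (simp add: hopf_alg_def)
lemma eps_lin: "lin_fun sm eps"
  using hopf by (simp add: hopf_alg_def)
lemma counitL: "tsum2 (\<lambda>a b. sm (eps a) b) (cop h) = h"
  using hopf by (simp add: hopf_alg_def)
lemma counitR: "tsum2 (\<lambda>a b. sm (eps b) a) (cop h) = h"
  using hopf by (simp add: hopf_alg_def)
lemma cop_mult: "teq2 sm sm (cop (x * y))
        (concat (map (\<lambda>(a, b). map (\<lambda>(c, d). (a * c, b * d)) (cop y)) (cop x)))"
  using hopf by (simp add: hopf_alg_def)
lemma cop_one: "teq2 sm sm (cop 1) [(1, 1)]"
  using hopf by (simp add: hopf_alg_def)
lemma eps_mult[simp]: "eps (x * y) = eps x * eps y"
  using hopf by (simp add: hopf_alg_def)
lemma eps_one[simp]: "eps 1 = 1"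
  using hopf by (simp add: hopf_alg_def)
lemma S_lin: "lin_map sm sm S"
  using hopf by (simp add: hopf_alg_def)
lemma antipodeL: "tsum2 (\<lambda>a b. S a * b) (cop h) = sm (eps h) 1"
  using hopf by (simp add: hopf_alg_def)
lemma antipodeR: "tsum2 (\<lambda>a b. a * S b) (cop h) = sm (eps h) 1"
  using hopf by (simp add: hopf_alg_def)

lemma eps_add[simp]: "eps (x + y) = eps x + eps y" using eps_lin by (simp add: lin_fun_def)
lemma eps_sm[simp]: "eps (sm c x) = c * eps x" using eps_lin by (simp add: lin_fun_def)
lemma eps_0[simp]: "eps 0 = 0" by (rule additive_0) simp
lemma eps_minus[simp]: "eps (- x) = - eps x" by (rule additive_minus) simp
lemma eps_diff[simp]: "eps (x - y) = eps x - eps y" by (rule additive_diff) simp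

lemma S_add[simp]: "S (x + y) = S x + S y" using S_lin by (simp add: lin_map_def)
lemma S_sm[simp]: "S (sm c x) = sm c (S x)" using S_lin by (simp add: lin_map_def)
lemma S_0[simp]: "S 0 = 0" by (rule additive_0) simp
lemma S_minus[simp]: "S (- x) = - S x" by (rule additive_minus) simp
lemma S_diff[simp]: "S (x - y) = S x - S y" by (rule additive_diff) simp

lemma phi_add[simp]: "\<phi> i (x + y) = \<phi> i x + \<phi> i y" using phi_lin by (simp add: lin_fun_def)
lemma phi_sm[simp]: "\<phi> i (sm c x) = c * \<phi> i x" using phi_lin by (simp add: lin_fun_def)
lemma phi_0[simp]: "\<phi> i 0 = 0" by (rule additive_0) simp
lemma phi_minus[simp]: "\<phi> i (- x) = - \<phi> i x" by (rule additive_minus) simp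
lemma phi_diff[simp]: "\<phi> i (x - y) = \<phi> i x - \<phi> i y" by (rule additive_diff) simp

lemma sep: "(\<And>i. \<phi> i u = \<phi> i v) \<Longrightarrow> u = v"
proof -
  assume "\<And>i. \<phi> i u = \<phi> i v"
  then have "u - v = 0" by (intro phi_sep) simp
  then show ?thesis by simp
qed

lemma tsum2_sm: "tsum2 (\<lambda>a b. sm c (f a b)) l = sm c (tsum2 f l)"
  by (induction l) (auto simp: vs.scale_right_distrib)
lemma tsum2_sm_var: "lin_fun sm g \<Longrightarrow> g (tsum2 (\<lambda>a b. sm (c a b) (f a b)) l) = tsum2 (\<lambda>a b. c a b * g (f a b)) l"
  by (induction l) (auto simp: lin_fun_def additive_0)
lemma tsum2_lin_map: "lin_map sm sm L \<Longrightarrow> L (tsum2 f l) = tsum2 (\<lambda>a b. L (f a b)) l"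
  by (rule tsum2_hom) (auto simp: lin_map_def intro: additive_0)
lemma tsum2_lin_fun: "lin_fun sm L \<Longrightarrow> L (tsum2 f l) = tsum2 (\<lambda>a b. L (f a b)) l"
  by (rule tsum2_hom) (auto simp: lin_fun_def intro: additive_0)
lemma phi_tsum2[simp]: "\<phi> i (tsum2 f l) = tsum2 (\<lambda>a b. \<phi> i (f a b)) l"
  by (rule tsum2_lin_fun[OF phi_lin])

lemma lin_mapI: "(\<And>x y. f (x+y) = f x + f y) \<Longrightarrow> (\<And>c x. f (sm c x) = sm c (f x)) \<Longrightarrow> lin_map sm sm f"
  by (simp add: lin_map_def)
lemma lin_funI: "(\<And>x y. f (x+y) = f x + f y) \<Longrightarrow> (\<And>c x. f (sm c x) = c * f x) \<Longrightarrow> lin_fun sm f"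
  by (simp add: lin_fun_def)
lemma bilinI:
  assumes "\<And>x y z. f (x+y) z = f x z + f y z" "\<And>c x z. f (sm c x) z = c * f x z"
    "\<And>x y z. f x (y+z) = f x y + f x z" "\<And>c x z. f x (sm c z) = c * f x z"
  shows "bilin sm sm f"
  using assms by (simp add: bilin_def lin_fun_def)
lemma trilinI:
  assumes "\<And>x y z w. f (x+y) z w = f x z w + f y z w" "\<And>c x z w. f (sm c x) z w = c * f x z w"
    "\<And>x y z w. f w (x+y) z = f w x z + f w y z" "\<And>c x z w. f w (sm c x) z = c * f w x z"
    "\<And>x y z w. f z w (x+y) = f z w x + f z w y" "\<And>c x z w. f z w (sm c x) = c * f z w x"
  shows "trilin sm f"
  using assms by (simp add: trilin_def lin_fun_def)

definition vbilin :: "('x \<Rightarrow> 'x \<Rightarrow> 'x) \<Rightarrow> bool" where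
  "vbilin g \<longleftrightarrow> (\<forall>y. lin_map sm sm (\<lambda>x. g x y)) \<and> (\<forall>x. lin_map sm sm (g x))"
definition vtrilin :: "('x \<Rightarrow> 'x \<Rightarrow> 'x \<Rightarrow> 'x) \<Rightarrow> bool" where
  "vtrilin g \<longleftrightarrow> (\<forall>y z. lin_map sm sm (\<lambda>x. g x y z)) \<and> (\<forall>x z. lin_map sm sm (\<lambda>y. g x y z))
     \<and> (\<forall>x y. lin_map sm sm (g x y))"

lemma vbilinI:
  assumes "\<And>x y z. f (x+y) z = f x z + f y z" "\<And>c x z. f (sm c x) z = sm c (f x z)"
    "\<And>x y z. f x (y+z) = f x y + f x z" "\<And>c x z. f x (sm c z) = sm c (f x z)"
  shows "vbilin f"
  using assms by (simp add: vbilin_def lin_map_def)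
lemma vtrilinI:
  assumes "\<And>x y z w. f (x+y) z w = f x z w + f y z w" "\<And>c x z w. f (sm c x) z w = sm c (f x z w)"
    "\<And>x y z w. f w (x+y) z = f w x z + f w y z" "\<And>c x z w. f w (sm c x) z = sm c (f w x z)"
    "\<And>x y z w. f z w (x+y) = f z w x + f z w y" "\<And>c x z w. f z w (sm c x) = sm c (f z w x)"
  shows "vtrilin f"
  using assms by (simp add: vtrilin_def lin_map_def)

lemma vbilin_phi: "vbilin g \<Longrightarrow> bilin sm sm (\<lambda>a b. \<phi> i (g a b))"
  by (simp add: vbilin_def bilin_def lin_map_def lin_fun_def)
lemma vtrilin_phi: "vtrilin g \<Longrightarrow> trilin sm (\<lambda>a b c. \<phi> i (g a b c))"
  by (simp add: vtrilin_def trilin_def lin_map_def lin_fun_def)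

lemma T_add: "bilin sm sm f \<Longrightarrow> tsum2 f (cop (x+y)) = tsum2 f (cop x) + tsum2 f (cop y)"
  using cop_add[of x y] by (simp add: teq2_def)
lemma T_sm: "bilin sm sm f \<Longrightarrow> tsum2 f (cop (sm c x)) = c * tsum2 f (cop x)"
proof -
  assume b: "bilin sm sm f"
  have "tsum2 f (cop (sm c x)) = tsum2 f (map (\<lambda>(a, b). (sm c a, b)) (cop x))"
    using cop_sm[of c x] b by (simp add: teq2_def)
  also have "\<dots> = tsum2 (\<lambda>a b. c * f a b) (cop x)"
  proof -
    have "(\<lambda>a b. f (sm c a) b) = (\<lambda>a b. c * f a b)"
      using b by (intro ext) (simp add: bilin_def lin_fun_def)
    then show ?thesis unfolding tsum2_map_sm by simp
  qed
  finally show ?thesis by (simp add: tsum2_cmult)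
qed
lemma T_lin: "bilin sm sm f \<Longrightarrow> lin_fun sm (\<lambda>x. tsum2 f (cop x))"
  by (simp add: lin_fun_def T_add T_sm)
lemma T_coassoc: "trilin sm t \<Longrightarrow>
   tsum2 (\<lambda>a b. tsum2 (\<lambda>c d. t c d b) (cop a)) (cop h) = tsum2 (\<lambda>a b. tsum2 (\<lambda>c d. t a c d) (cop b)) (cop h)"
  using coassoc[of h] by (simp add: teq3_def cop2L_def cop2R_def tsum3_cop2L tsum3_cop2R tsum3_cop2R')
lemma T_mult: "bilin sm sm f \<Longrightarrow>
   tsum2 f (cop (x*y)) = tsum2 (\<lambda>a b. tsum2 (\<lambda>c d. f (a*c) (b*d)) (cop y)) (cop x)"
  using cop_mult[of x y] by (simp add: teq2_def tsum2_concat_prod)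
lemma T_one: "bilin sm sm f \<Longrightarrow> tsum2 f (cop 1) = f 1 1"
  using cop_one by (simp add: teq2_def)

lemma vT_add: "vbilin g \<Longrightarrow> tsum2 g (cop (x+y)) = tsum2 g (cop x) + tsum2 g (cop y)"
  by (rule sep) (simp add: T_add vbilin_phi)
lemma vT_sm: "vbilin g \<Longrightarrow> tsum2 g (cop (sm c x)) = sm c (tsum2 g (cop x))"
  by (rule sep) (simp add: T_sm vbilin_phi)
lemma vT_lin: "vbilin g \<Longrightarrow> lin_map sm sm (\<lambda>x. tsum2 g (cop x))"
  by (simp add: lin_map_def vT_add vT_sm)
lemma vT_coassoc: "vtrilin t \<Longrightarrow>
   tsum2 (\<lambda>a b. tsum2 (\<lambda>c d. t c d b) (cop a)) (cop h) = tsum2 (\<lambda>a b. tsum2 (\<lambda>c d. t a c d) (cop b)) (cop h)"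
  by (rule sep) (simp add: T_coassoc vtrilin_phi)
lemma vT_mult: "vbilin g \<Longrightarrow>
   tsum2 g (cop (x*y)) = tsum2 (\<lambda>a b. tsum2 (\<lambda>c d. g (a*c) (b*d)) (cop y)) (cop x)"
  by (rule sep) (simp add: T_mult vbilin_phi)
lemma vT_one: "vbilin g \<Longrightarrow> tsum2 g (cop 1) = g 1 1"
  by (rule sep) (simp add: T_one vbilin_phi)

lemma counitL_map: "lin_map sm sm L \<Longrightarrow> tsum2 (\<lambda>a b. sm (eps a) (L b)) (cop h) = L h"
  using tsum2_lin_map[of L "\<lambda>a b. sm (eps a) b" "cop h"] counitL[of h] by (simp add: lin_map_def)
lemma counitR_map: "lin_map sm sm L \<Longrightarrow> tsum2 (\<lambda>a b. sm (eps b) (L a)) (cop h) = L h"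
  using tsum2_lin_map[of L "\<lambda>a b. sm (eps b) a" "cop h"] counitR[of h] by (simp add: lin_map_def)
lemma counitL_fun: "lin_fun sm L \<Longrightarrow> tsum2 (\<lambda>a b. eps a * L b) (cop h) = L h"
  using tsum2_lin_fun[of L "\<lambda>a b. sm (eps a) b" "cop h"] counitL[of h] by (simp add: lin_fun_def)
lemma counitR_fun: "lin_fun sm L \<Longrightarrow> tsum2 (\<lambda>a b. eps b * L a) (cop h) = L h"
  using tsum2_lin_fun[of L "\<lambda>a b. sm (eps b) a" "cop h"] counitR[of h] by (simp add: lin_fun_def)

lemma S_one[simp]: "S 1 = 1"
proof -
  have "vbilin (\<lambda>a b. S a * b)"
    by (rule vbilinI) (auto simp: algebra_simps)
  then have "tsum2 (\<lambda>a b. S a * b) (cop 1) = S 1 * 1" by (rule vT_one)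
  then show ?thesis using antipodeL[of 1] by simp
qed


lemmas push = tsum2_cmult[symmetric] tsum2_multc[symmetric] mult.assoc
lemmas linsimps = distrib_left distrib_right tsum2_add tsum2_sm vs.scale_right_distrib

lemma S_mult: "S (x * y) = S y * S x"
proof -
  have s1: "S (x*y) = tsum2 (\<lambda>x1 x2. tsum2 (\<lambda>y1 y2. sm (eps x2) (sm (eps y2) (S (x1*y1)))) (cop y)) (cop x)"
  proof -
    have inner: "tsum2 (\<lambda>y1 y2. sm (eps y2) (S (x1*y1))) (cop y) = S (x1*y)" for x1
      by (rule counitR_map[of "\<lambda>z. S (x1*z)" y]) (rule lin_mapI, simp_all add: distrib_left)
    have outer: "tsum2 (\<lambda>x1 x2. sm (eps x2) (S (x1*y))) (cop x) = S (x*y)"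
      by (rule counitR_map[of "\<lambda>z. S (z*y)" x]) (rule lin_mapI, simp_all add: distrib_right)
    show ?thesis by (simp only: tsum2_sm inner outer)
  qed
  have s2: "sm (eps x2) (sm (eps y2) w) = tsum2 (\<lambda>x21 x22. tsum2 (\<lambda>y21 y22. w * (x21*y21*S y22*S x22)) (cop y2)) (cop x2)" for x2 y2 w
  proof -
    have A: "tsum2 (\<lambda>y21 y22. w * (x21*y21*S y22*S x22)) (cop y2) = sm (eps y2) (w * (x21 * S x22))" for x21 x22
    proof -
      have "tsum2 (\<lambda>y21 y22. w * (x21*y21*S y22*S x22)) (cop y2) = w * x21 * tsum2 (\<lambda>a b. a * S b) (cop y2) * S x22"
        by (simp add: push)
      then show ?thesis by (simp add: antipodeR mult.assoc)
    qed
    have B: "tsum2 (\<lambda>x21 x22. sm (eps y2) (w * (x21 * S x22))) (cop x2) = sm (eps y2) (w * tsum2 (\<lambda>a b. a * S b) (cop x2))"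
      by (simp add: push tsum2_sm)
    show ?thesis by (simp add: A B antipodeR vs.scale_left_commute)
  qed
  have s12: "S (x*y) = tsum2 (\<lambda>x1 x2. tsum2 (\<lambda>y1 y2. tsum2 (\<lambda>x21 x22. tsum2 (\<lambda>y21 y22.
        S (x1*y1) * (x21*y21*S y22*S x22)) (cop y2)) (cop x2)) (cop y)) (cop x)"
    using s1 unfolding s2 .
  define G where "G = (\<lambda>a b c. tsum2 (\<lambda>y1 y2. tsum2 (\<lambda>y21 y22. S (a*y1) * (b*y21*S y22*S c)) (cop y2)) (cop y))"
  have s3: "S (x*y) = tsum2 (\<lambda>x1 x2. tsum2 (\<lambda>x21 x22. G x1 x21 x22) (cop x2)) (cop x)"
    unfolding s12 G_def by (subst tsum2_swap) (rule refl)
  have Gtri: "vtrilin G" unfolding G_def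
    by (rule vtrilinI) (simp_all add: linsimps)
  have s4: "S (x*y) = tsum2 (\<lambda>x1 x2. tsum2 (\<lambda>x11 x12. G x11 x12 x2) (cop x1)) (cop x)"
    unfolding s3 by (rule vT_coassoc[OF Gtri, symmetric])
  have Gc: "G a b c = tsum2 (\<lambda>y1 y2. tsum2 (\<lambda>y11 y12. S (a*y11) * (b*y12*S y2*S c)) (cop y1)) (cop y)" for a b c
  proof -
    have "vtrilin (\<lambda>p q r. S (a*p) * (b*q*S r*S c))"
      by (rule vtrilinI) (simp_all add: linsimps)
    from vT_coassoc[OF this, of y] show ?thesis unfolding G_def by simp
  qed
  have inner: "tsum2 (\<lambda>x11 x12. tsum2 (\<lambda>y11 y12. S (x11*y11) * (x12*y12*S y2*S x2)) (cop y1)) (cop x1)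
      = sm (eps x1) (sm (eps y1) (S y2 * S x2))" for x1 x2 y1 y2
  proof -
    have vb: "vbilin (\<lambda>p q. S p * q)" by (rule vbilinI) (simp_all add: linsimps)
    have "tsum2 (\<lambda>x11 x12. tsum2 (\<lambda>y11 y12. S (x11*y11) * (x12*y12*S y2*S x2)) (cop y1)) (cop x1)
       = tsum2 (\<lambda>x11 x12. tsum2 (\<lambda>y11 y12. S (x11*y11) * (x12*y12)) (cop y1)) (cop x1) * (S y2 * S x2)"
      by (simp add: push)
    also have "\<dots> = tsum2 (\<lambda>p q. S p * q) (cop (x1*y1)) * (S y2 * S x2)"
      by (simp add: vT_mult[OF vb])
    also have "\<dots> = sm (eps x1) (sm (eps y1) (S y2 * S x2))"
      by (simp add: antipodeL)
    finally show ?thesis .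
  qed
  have s5: "S (x*y) = tsum2 (\<lambda>x1 x2. tsum2 (\<lambda>y1 y2. sm (eps x1) (sm (eps y1) (S y2 * S x2))) (cop y)) (cop x)"
    unfolding s4 Gc by (subst tsum2_swap) (simp add: inner)
  have i5: "tsum2 (\<lambda>y1 y2. sm (eps y1) (S y2 * S x2)) (cop y) = S y * S x2" for x2
    by (rule counitL_map[of "\<lambda>z. S z * S x2"]) (rule lin_mapI, simp_all add: distrib_right)
  have o5: "tsum2 (\<lambda>x1 x2. sm (eps x1) (S y * S x2)) (cop x) = S y * S x"
    by (rule counitL_map[of "\<lambda>z. S y * S z"]) (rule lin_mapI, simp_all add: distrib_left)
  show ?thesis unfolding s5 by (simp only: tsum2_sm i5 o5)
qed


lemma Ad_sum_gen: "tsum2 f (map (\<lambda>(b, c, d). (b * S d, c)) (concat (map (\<lambda>(a, b). map (\<lambda>(c, d). (c, d, b)) (cop a)) l)))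
   = tsum2 (\<lambda>p q. tsum2 (\<lambda>r s. f (r * S q) s) (cop p)) l"
proof (induction l)
  case Nil then show ?case by simp
next
  case (Cons p l)
  have h: "tsum2 f (map (\<lambda>a. (fst a * X, snd a)) m) = tsum2 (\<lambda>r s. f (r * X) s) m" for X m
    by (induction m) (auto simp: split_beta)
  from Cons show ?case by (simp add: split_beta o_def h)
qed

lemma Ad_sum: "tsum2 f (adcoact cop S v) = tsum2 (\<lambda>p q. tsum2 (\<lambda>r s. f (r * S q) s) (cop p)) (cop v)"
  unfolding adcoact_def cop2L_def by (rule Ad_sum_gen)

lemma bilin_D: assumes "bilin sm sm f"
  shows "f (x+y) z = f x z + f y z" "f (sm c x) z = c * f x z" "f x (y+z) = f x y + f x z" "f x (sm c z) = c * f x z"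
    "f (x - y) z = f x z - f y z" "f x (y - z) = f x y - f x z" "f 0 z = 0" "f x 0 = 0"
proof -
  have l1: "lin_fun sm (\<lambda>x. f x z)" for z using assms by (simp add: bilin_def)
  have l2: "lin_fun sm (f x)" for x using assms by (simp add: bilin_def)
  show "f (x+y) z = f x z + f y z" "f (sm c x) z = c * f x z" using l1 by (simp_all add: lin_fun_def)
  show "f x (y+z) = f x y + f x z" "f x (sm c z) = c * f x z" using l2 by (simp_all add: lin_fun_def)
  show "f (x - y) z = f x z - f y z" using l1[of z] by (intro additive_diff[of "\<lambda>x. f x z"]) (simp add: lin_fun_def)
  show "f x (y - z) = f x y - f x z" using l2[of x] by (intro additive_diff[of "f x"]) (simp add: lin_fun_def)
  show "f 0 z = 0" using l1[of z] by (intro additive_0[of "\<lambda>x. f x z"]) (simp add: lin_fun_def)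
  show "f x 0 = 0" using l2[of x] by (intro additive_0[of "f x"]) (simp add: lin_fun_def)
qed

lemma Ad_G_bilin: "bilin sm sm f \<Longrightarrow> bilin sm sm (\<lambda>p q. tsum2 (\<lambda>r s. f (r * S q) s) (cop p))"
proof -
  assume b: "bilin sm sm f"
  have b2: "bilin sm sm (\<lambda>r s. f (r * S q) s)" for q
    by (rule bilinI) (simp_all add: bilin_D[OF b] distrib_right)
  show ?thesis
    by (rule bilinI) (simp_all add: T_add[OF b2] T_sm[OF b2] bilin_D[OF b] distrib_left tsum2_add tsum2_cmult)
qed

lemma Ad_diff: "bilin sm sm f \<Longrightarrow> tsum2 f (adcoact cop S (x - sm e y)) = tsum2 f (adcoact cop S x) - e * tsum2 f (adcoact cop S y)"
proof -
  assume b: "bilin sm sm f"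
  have L: "lin_fun sm (\<lambda>v. tsum2 f (adcoact cop S v))"
    unfolding Ad_sum by (rule T_lin[OF Ad_G_bilin[OF b]])
  have "tsum2 f (adcoact cop S (x - sm e y)) = tsum2 f (adcoact cop S x) - tsum2 f (adcoact cop S (sm e y))"
    using L by (intro additive_diff[of "\<lambda>v. tsum2 f (adcoact cop S v)"]) (simp add: lin_fun_def)
  then show ?thesis using L by (simp add: lin_fun_def)
qed

lemma Ad_prod:
  assumes b: "bilin sm sm f" and inv: "teq2 sm sm (adcoact cop S c) [(1, c)]"
  shows "tsum2 f (adcoact cop S (a*c)) = tsum2 (\<lambda>a1 a2. tsum2 (\<lambda>a11 a12. f (a11 * S a2) (a12 * c)) (cop a1)) (cop a)"
proof -
  have b2: "bilin sm sm (\<lambda>r s. f (r * X) s)" for X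
    by (rule bilinI) (simp_all add: bilin_D[OF b] distrib_right)
  have "tsum2 f (adcoact cop S (a*c)) = tsum2 (\<lambda>a1 a2. tsum2 (\<lambda>b1 b2.
      tsum2 (\<lambda>r s. f (r * S (a2*b2)) s) (cop (a1*b1))) (cop c)) (cop a)"
    unfolding Ad_sum by (rule T_mult[OF Ad_G_bilin[OF b]])
  also have "\<dots> = tsum2 (\<lambda>a1 a2. tsum2 (\<lambda>b1 b2. tsum2 (\<lambda>a11 a12. tsum2 (\<lambda>b11 b12.
      f (a11 * (b11 * S b2) * S a2) (a12 * b12)) (cop b1)) (cop a1)) (cop c)) (cop a)"
    by (simp add: T_mult[OF b2] S_mult mult.assoc)
  also have "\<dots> = tsum2 (\<lambda>a1 a2. tsum2 (\<lambda>a11 a12. tsum2 (\<lambda>b1 b2. tsum2 (\<lambda>b11 b12.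
      f (a11 * (b11 * S b2) * S a2) (a12 * b12)) (cop b1)) (cop c)) (cop a1)) (cop a)"
    by (subst tsum2_swap) (rule refl)
  also have "\<dots> = tsum2 (\<lambda>a1 a2. tsum2 (\<lambda>a11 a12. f (a11 * S a2) (a12 * c)) (cop a1)) (cop a)"
  proof -
    have "tsum2 (\<lambda>b1 b2. tsum2 (\<lambda>b11 b12. f (a11 * (b11 * S b2) * S a2) (a12 * b12)) (cop b1)) (cop c)
        = f (a11 * S a2) (a12 * c)" for a11 a12 a2
    proof -
      have bF: "bilin sm sm (\<lambda>u v. f (a11 * u * S a2) (a12 * v))"
        by (rule bilinI) (simp_all add: bilin_D[OF b] distrib_right distrib_left)
      have "tsum2 (\<lambda>u v. f (a11 * u * S a2) (a12 * v)) (adcoact cop S c) = f (a11 * 1 * S a2) (a12 * c)"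
        using inv bF by (simp add: teq2_def)
      then show ?thesis unfolding Ad_sum by simp
    qed
    then show ?thesis by simp
  qed
  finally show ?thesis .
qed

lemma Ad_M:
  assumes b: "bilin sm sm f" and inv: "teq2 sm sm (adcoact cop S c) [(1, c)]"
  shows "tsum2 f (adcoact cop S (a*c - sm e a)) = tsum2 (\<lambda>a1 a2. tsum2 (\<lambda>a11 a12. f (a11 * S a2) (a12 * c - sm e a12)) (cop a1)) (cop a)"
  unfolding Ad_diff[OF b] Ad_prod[OF b inv] unfolding Ad_sum
  by (simp add: bilin_D[OF b] tsum2_diff tsum2_cmult)


lemma set_ops:
  shows "(0::'x) * c - sm e 0 = 0"
    and "(a*c - sm e a) + (a'*c - sm e a') = (a+a')*c - sm e (a+a')"
    and "sm k (a*c - sm e a) = (sm k a)*c - sm e (sm k a)"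
    and "x * (a*c - sm e a) = (x*a)*c - sm e (x*a)"
  by (simp_all add: algebra_simps vs.scale_right_distrib vs.scale_right_diff_distrib vs.scale_left_commute)

lemma bicov_all:
  assumes inv: "teq2 sm sm (adcoact cop S c) [(1, c)]"
  shows "bicov_quot sm cop eps S {a*c - sm (eps c) a | a. True}"
proof -
  let ?M = "{a*c - sm (eps c) a | a. True}"
  have Ad: "in_tensor_right sm sm ?M (adcoact cop S m)" if "m \<in> ?M" for m
  proof -
    from that obtain a where m: "m = a*c - sm (eps c) a" by auto
    show ?thesis unfolding in_tensor_right_def
    proof (intro allI impI)
      fix f assume "bilin sm sm f \<and> (\<forall>x. \<forall>m\<in>?M. f x m = 0)"
      then have b: "bilin sm sm f" and z: "\<And>x a. f x (a*c - sm (eps c) a) = 0" by auto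
      show "tsum2 f (adcoact cop S m) = 0" unfolding m Ad_M[OF b inv] by (simp add: z)
    qed
  qed
  show ?thesis unfolding bicov_quot_def
  proof (intro conjI ballI allI)
    show "0 \<in> ?M" using set_ops(1) by (metis (mono_tags, lifting) mem_Collect_eq)
    show "x + y \<in> ?M" if "x \<in> ?M" "y \<in> ?M" for x y using that set_ops(2) by blast
    show "sm k x \<in> ?M" if "x \<in> ?M" for k x using that set_ops(3) by blast
    show "?M \<subseteq> {a. eps a = 0}" by auto
    show "x * m \<in> ?M" if "m \<in> ?M" for x m using that set_ops(4) by blast
    show "in_tensor_right sm sm ?M (adcoact cop S m)" if "m \<in> ?M" for m using Ad that .
  qed
qed

lemma bicov_ker:
  assumes inv: "teq2 sm sm (adcoact cop S c) [(1, c)]"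
  shows "bicov_quot sm cop eps S {a*c - sm e a | a. eps a = 0}"
proof -
  let ?M = "{a*c - sm e a | a. eps a = 0}"
  have Ad: "in_tensor_right sm sm ?M (adcoact cop S m)" if "m \<in> ?M" for m
  proof -
    from that obtain a where m: "m = a*c - sm e a" and ea: "eps a = 0" by auto
    show ?thesis unfolding in_tensor_right_def
    proof (intro allI impI)
      fix f assume "bilin sm sm f \<and> (\<forall>x. \<forall>m\<in>?M. f x m = 0)"
      then have b: "bilin sm sm f" and z: "\<And>x a. eps a = 0 \<Longrightarrow> f x (a*c - sm e a) = 0" by auto
      define W where "W = c - sm e 1"
      have dec: "f u (a12*c - sm e a12) = eps a12 * f u W" for u a12
      proof -
        let ?v = "a12 - sm (eps a12) 1"
        have ev: "eps ?v = 0" by simp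
        have "a12*c - sm e a12 = (?v*c - sm e ?v) + sm (eps a12) W"
          by (simp add: W_def algebra_simps vs.scale_right_diff_distrib vs.scale_left_commute)
        then show ?thesis using z[OF ev, of u] by (simp add: bilin_D[OF b])
      qed
      have lf: "lin_fun sm (\<lambda>u. f u W)" using b by (simp add: bilin_def)
      have "tsum2 (\<lambda>a11 a12. eps a12 * f (a11 * S a2) W) (cop a1) = f (a1 * S a2) W" for a1 a2
      proof -
        have "tsum2 (\<lambda>a11 a12. eps a12 * f (a11 * S a2) W) (cop a1)
            = f (tsum2 (\<lambda>a11 a12. sm (eps a12) (a11 * S a2)) (cop a1)) W"
          using tsum2_sm_var[OF lf, of "\<lambda>a b. eps b" "\<lambda>a b. a * S a2" "cop a1"] by simp
        also have "tsum2 (\<lambda>a11 a12. sm (eps a12) (a11 * S a2)) (cop a1) = a1 * S a2"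
          by (rule counitR_map[of "\<lambda>z. z * S a2"]) (rule lin_mapI, simp_all add: distrib_right)
        finally show ?thesis .
      qed
      then have "tsum2 f (adcoact cop S m) = tsum2 (\<lambda>a1 a2. f (a1 * S a2) W) (cop a)"
        unfolding m Ad_M[OF b inv] by (simp add: dec)
      also have "\<dots> = f (tsum2 (\<lambda>a1 a2. a1 * S a2) (cop a)) W"
        by (rule tsum2_lin_fun[OF lf, symmetric])
      also have "\<dots> = 0" by (simp add: antipodeR ea bilin_D[OF b])
      finally show "tsum2 f (adcoact cop S m) = 0" .
    qed
  qed
  show ?thesis unfolding bicov_quot_def
  proof (intro conjI ballI allI)
    show "0 \<in> ?M" using set_ops(1) eps_0 by (metis (mono_tags, lifting) mem_Collect_eq)
    show "x + y \<in> ?M" if "x \<in> ?M" "y \<in> ?M" for x y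
    proof -
      from that obtain a a' where "x = a*c - sm e a" "eps a = 0" "y = a'*c - sm e a'" "eps a' = 0" by auto
      then have "x + y = (a+a')*c - sm e (a+a')" "eps (a+a') = 0" using set_ops(2) by simp_all
      then show ?thesis by blast
    qed
    show "sm k x \<in> ?M" if "x \<in> ?M" for k x
    proof -
      from that obtain a where "x = a*c - sm e a" "eps a = 0" by auto
      then have "sm k x = (sm k a)*c - sm e (sm k a)" "eps (sm k a) = 0" using set_ops(3) by simp_all
      then show ?thesis by blast
    qed
    show "?M \<subseteq> {a. eps a = 0}" by auto
    show "x * m \<in> ?M" if "m \<in> ?M" for x m
    proof -
      from that obtain a where "m = a*c - sm e a" "eps a = 0" by auto
      then have "x * m = (x*a)*c - sm e (x*a)" "eps (x*a) = 0" using set_ops(4) by simp_all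
      then show ?thesis by blast
    qed
    show "in_tensor_right sm sm ?M (adcoact cop S m)" if "m \<in> ?M" for m using Ad that .
  qed
qed

end


locale hp = H: hopf smH copH epsH SH "\<lambda>a h. pr h a" + A: hopf smA copA epsA SA pr
  for smH :: "complex \<Rightarrow> 'h::ring_1 \<Rightarrow> 'h" and copH epsH SH
    and smA :: "complex \<Rightarrow> 'a::ring_1 \<Rightarrow> 'a" and copA epsA SA and pr :: "'h \<Rightarrow> 'a \<Rightarrow> complex" +
  assumes pairing: "hopf_pairing smH copH epsH smA copA epsA pr"
begin

lemma pr_mult_left: "pr (h * g) a = tsum2 (\<lambda>a1 a2. pr h a1 * pr g a2) (copA a)"
  using pairing by (simp add: hopf_pairing_def)
lemma pr_mult_right: "pr h (a * b) = tsum2 (\<lambda>h1 h2. pr h1 a * pr h2 b) (copH h)"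
  using pairing by (simp add: hopf_pairing_def)
lemma pr_one_left[simp]: "pr 1 a = epsA a"
  using pairing by (simp add: hopf_pairing_def)
lemma pr_one_right[simp]: "pr h 1 = epsH h"
  using pairing by (simp add: hopf_pairing_def)

lemma pr_S: "pr (SH g) b = pr g (SA b)"
proof -
  have a1: "pr (SH g) b = tsum2 (\<lambda>g1 g2. tsum2 (\<lambda>b1 b2. pr (SH g1) b1 * (epsH g2 * epsA b2)) (copA b)) (copH g)"
  proof -
    have i: "tsum2 (\<lambda>b1 b2. epsA b2 * pr (SH g1) b1) (copA b) = pr (SH g1) b" for g1
      by (rule A.counitR_fun) (rule A.lin_funI, simp_all)
    have o: "tsum2 (\<lambda>g1 g2. epsH g2 * pr (SH g1) b) (copH g) = pr (SH g) b"
      by (rule H.counitR_fun[of "\<lambda>z. pr (SH z) b"]) (rule H.lin_funI, simp_all)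
    have "tsum2 (\<lambda>g1 g2. tsum2 (\<lambda>b1 b2. pr (SH g1) b1 * (epsH g2 * epsA b2)) (copA b)) (copH g)
       = tsum2 (\<lambda>g1 g2. epsH g2 * tsum2 (\<lambda>b1 b2. epsA b2 * pr (SH g1) b1) (copA b)) (copH g)"
      by (simp add: tsum2_cmult[symmetric] ac_simps)
    then show ?thesis using i o by simp
  qed
  have a2: "epsH g2 * epsA b2 = tsum2 (\<lambda>b21 b22. tsum2 (\<lambda>g21 g22. pr g21 b21 * pr g22 (SA b22)) (copH g2)) (copA b2)" for g2 b2
  proof -
    have "tsum2 (\<lambda>b21 b22. pr g2 (b21 * SA b22)) (copA b2) = pr g2 (tsum2 (\<lambda>b21 b22. b21 * SA b22) (copA b2))"
      by simp
    then show ?thesis by (simp add: pr_mult_right A.antipodeR)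
  qed
  define \<Phi> where "\<Phi> = (\<lambda>u v w. tsum2 (\<lambda>b1 b2. tsum2 (\<lambda>b21 b22. pr (SH u) b1 * (pr v b21 * pr w (SA b22))) (copA b2)) (copA b))"
  have a3: "pr (SH g) b = tsum2 (\<lambda>g1 g2. tsum2 (\<lambda>g21 g22. \<Phi> g1 g21 g22) (copH g2)) (copH g)"
  proof -
    have "pr (SH g) b = tsum2 (\<lambda>g1 g2. tsum2 (\<lambda>b1 b2. tsum2 (\<lambda>b21 b22. tsum2 (\<lambda>g21 g22.
        pr (SH g1) b1 * (pr g21 b21 * pr g22 (SA b22))) (copH g2)) (copA b2)) (copA b)) (copH g)"
      unfolding a1 a2 by (simp add: tsum2_cmult)
    also have "\<dots> = tsum2 (\<lambda>g1 g2. tsum2 (\<lambda>g21 g22. \<Phi> g1 g21 g22) (copH g2)) (copH g)"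
      unfolding \<Phi>_def by (subst (2) tsum2_swap, subst (2) tsum2_swap, rule refl)
    finally show ?thesis .
  qed
  have tri: "trilin smH \<Phi>" unfolding \<Phi>_def
    by (rule H.trilinI) (simp_all add: algebra_simps tsum2_add tsum2_cmult)
  have Phi: "\<Phi> u v w = tsum2 (\<lambda>b1 b2. tsum2 (\<lambda>b11 b12. pr (SH u) b11 * (pr v b12 * pr w (SA b2))) (copA b1)) (copA b)" for u v w
  proof -
    have "trilin smA (\<lambda>p q r. pr (SH u) p * (pr v q * pr w (SA r)))"
      by (rule A.trilinI) (simp_all add: algebra_simps)
    from A.T_coassoc[OF this, of b] show ?thesis unfolding \<Phi>_def by simp
  qed
  have a4: "pr (SH g) b = tsum2 (\<lambda>g1 g2. tsum2 (\<lambda>g11 g12. \<Phi> g11 g12 g2) (copH g1)) (copH g)"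
    unfolding a3 by (rule H.T_coassoc[OF tri, symmetric])
  have inner: "tsum2 (\<lambda>g11 g12. tsum2 (\<lambda>b11 b12. pr (SH g11) b11 * (pr g12 b12 * X)) (copA b1)) (copH g1)
      = epsH g1 * epsA b1 * X" for g1 b1 X
  proof -
    have "tsum2 (\<lambda>g11 g12. tsum2 (\<lambda>b11 b12. pr (SH g11) b11 * (pr g12 b12 * X)) (copA b1)) (copH g1)
       = tsum2 (\<lambda>g11 g12. pr (SH g11 * g12) b1) (copH g1) * X"
      by (simp add: pr_mult_left tsum2_multc[symmetric] mult.assoc)
    also have "\<dots> = pr (tsum2 (\<lambda>g11 g12. SH g11 * g12) (copH g1)) b1 * X" by simp
    also have "\<dots> = epsH g1 * epsA b1 * X" by (simp add: H.antipodeL)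
    finally show ?thesis .
  qed
  have a5: "pr (SH g) b = tsum2 (\<lambda>g1 g2. tsum2 (\<lambda>b1 b2. epsH g1 * epsA b1 * pr g2 (SA b2)) (copA b)) (copH g)"
    unfolding a4 Phi by (subst (1) tsum2_swap) (simp add: inner)
  have i5: "tsum2 (\<lambda>b1 b2. epsA b1 * pr g2 (SA b2)) (copA b) = pr g2 (SA b)" for g2
    by (rule A.counitL_fun[of "\<lambda>z. pr g2 (SA z)"]) (rule A.lin_funI, simp_all)
  have o5: "tsum2 (\<lambda>g1 g2. epsH g1 * pr g2 (SA b)) (copH g) = pr g (SA b)"
    by (rule H.counitL_fun[of "\<lambda>z. pr z (SA b)"]) (rule H.lin_funI, simp_all)
  show ?thesis unfolding a5 by (simp add: mult.assoc tsum2_cmult i5 o5)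
qed


lemma stable:
  assumes M: "bicov_quot smA copA epsA SA M"
  shows "double_stable smH copH SH pr (qtangent epsH pr M)"
proof -
  have Mker: "\<And>m. m \<in> M \<Longrightarrow> epsA m = 0" and Mid: "\<And>a m. m \<in> M \<Longrightarrow> a * m \<in> M"
    and MAd: "\<And>m. m \<in> M \<Longrightarrow> in_tensor_right smA smA M (adcoact copA SA m)"
    using M unfolding bicov_quot_def by auto
  have H1: "actH copH SH h x \<in> qtangent epsH pr M" if x: "x \<in> qtangent epsH pr M" for h x
  proof -
    from x have ex: "epsH x = 0" and px: "\<And>m. m \<in> M \<Longrightarrow> pr x m = 0" by (auto simp: qtangent_def)
    have "epsH (actH copH SH h x) = 0"
      unfolding actH_def by (simp add: H.tsum2_lin_fun[OF H.eps_lin] ex)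
    moreover have "pr (actH copH SH h x) m = 0" if m: "m \<in> M" for m
    proof -
      have b: "bilin smA smA (\<lambda>u v. pr h u * pr x v)"
        by (rule A.bilinI) (simp_all add: algebra_simps)
      have z: "tsum2 (\<lambda>u v. pr h u * pr x v) (adcoact copA SA m) = 0"
        using MAd[OF m] b px unfolding in_tensor_right_def by auto
      have "pr (actH copH SH h x) m = tsum2 (\<lambda>h1 h2. tsum2 (\<lambda>p q. tsum2 (\<lambda>r s.
          pr h1 r * pr x s * pr h2 (SA q)) (copA p)) (copA m)) (copH h)"
        unfolding actH_def by (simp add: pr_mult_left pr_S tsum2_multc[symmetric])
      also have "\<dots> = tsum2 (\<lambda>p q. tsum2 (\<lambda>h1 h2. tsum2 (\<lambda>r s.
          pr h1 r * pr x s * pr h2 (SA q)) (copA p)) (copH h)) (copA m)"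
        by (rule tsum2_swap)
      also have "\<dots> = tsum2 (\<lambda>p q. tsum2 (\<lambda>r s. tsum2 (\<lambda>h1 h2.
          pr h1 r * pr x s * pr h2 (SA q)) (copH h)) (copA p)) (copA m)"
        by (subst (1) tsum2_swap) (rule refl)
      also have "\<dots> = tsum2 (\<lambda>p q. tsum2 (\<lambda>r s. tsum2 (\<lambda>h1 h2.
          pr h1 r * pr h2 (SA q) * pr x s) (copH h)) (copA p)) (copA m)"
        by (simp add: ac_simps)
      also have "\<dots> = tsum2 (\<lambda>u v. pr h u * pr x v) (adcoact copA SA m)"
        unfolding A.Ad_sum by (simp add: pr_mult_right tsum2_multc)
      finally show ?thesis using z by simp
    qed
    ultimately show ?thesis by (simp add: qtangent_def)
  qed
  have A1: "actA smH copH pr a x \<in> qtangent epsH pr M" if x: "x \<in> qtangent epsH pr M" for a x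
  proof -
    from x have ex: "epsH x = 0" and px: "\<And>m. m \<in> M \<Longrightarrow> pr x m = 0" by (auto simp: qtangent_def)
    have c: "tsum2 (\<lambda>x1 x2. epsH x2 * pr x1 a) (copH x) = pr x a"
      by (rule H.counitR_fun[of "\<lambda>z. pr z a"]) (rule H.lin_funI, simp_all)
    have "epsH (actA smH copH pr a x) = 0"
      unfolding actA_def using c by (simp add: H.tsum2_lin_fun[OF H.eps_lin] ac_simps)
    moreover have "pr (actA smH copH pr a x) m = 0" if m: "m \<in> M" for m
    proof -
      have "pr (actA smH copH pr a x) m = pr x (a * m) - pr x a * epsA m"
        unfolding actA_def by (simp add: pr_mult_right)
      then show ?thesis using Mker[OF m] px[OF Mid[OF m]] by simp
    qed
    ultimately show ?thesis by (simp add: qtangent_def)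
  qed
  show ?thesis unfolding double_stable_def using H1 A1 by blast
qed

lemma L_alpha_eq: "L_alpha smH copH epsH epsA pr \<alpha> = qtangent epsH pr {a * \<alpha> - smA (epsA \<alpha>) a | a. True}"
proof -
  have key: "pr (tsum2 (\<lambda>x1 x2. smH (pr x2 \<alpha>) x1) (copH x)) a = pr x (a * \<alpha>)" for x a
    by (simp add: pr_mult_right ac_simps)
  show ?thesis
  proof (intro set_eqI iffI)
    fix x assume "x \<in> L_alpha smH copH epsH epsA pr \<alpha>"
    then have ex: "epsH x = 0" and L: "tsum2 (\<lambda>x1 x2. smH (pr x2 \<alpha>) x1) (copH x) = smH (epsA \<alpha>) x"
      by (auto simp: L_alpha_def)
    have "pr x (a * \<alpha> - smA (epsA \<alpha>) a) = 0" for a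
      using key[of x a] unfolding L by simp
    then show "x \<in> qtangent epsH pr {a * \<alpha> - smA (epsA \<alpha>) a | a. True}"
      using ex by (auto simp: qtangent_def)
  next
    fix x assume "x \<in> qtangent epsH pr {a * \<alpha> - smA (epsA \<alpha>) a | a. True}"
    then have ex: "epsH x = 0" and z: "\<And>a. pr x (a * \<alpha> - smA (epsA \<alpha>) a) = 0"
      by (auto simp: qtangent_def)
    have "tsum2 (\<lambda>x1 x2. smH (pr x2 \<alpha>) x1) (copH x) = smH (epsA \<alpha>) x"
    proof (rule H.sep)
      fix a show "pr (tsum2 (\<lambda>x1 x2. smH (pr x2 \<alpha>) x1) (copH x)) a = pr (smH (epsA \<alpha>) x) a"
        using z[of a] unfolding key by simp
    qed
    then show "x \<in> L_alpha smH copH epsH epsA pr \<alpha>" using ex by (simp add: L_alpha_def)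
  qed
qed

lemma L_tilde_eq: "L_alpha_tilde epsH epsA pr \<alpha> = qtangent epsH pr {a * \<alpha> - smA (epsA \<alpha>) a | a. epsA a = 0}"
  unfolding L_alpha_tilde_def qtangent_def by (auto simp: ac_simps)

lemma M2_eq: "{a * (\<alpha> - smA (epsA \<alpha> + 1) 1) | a. epsA a = 0} = {a * \<alpha> - smA (epsA \<alpha> + 1) a | a. epsA a = 0}"
  by (simp add: right_diff_distrib)

lemma L_1_eq: "L_alpha_1 epsH epsA pr \<alpha> = qtangent epsH pr {a * (\<alpha> - smA (epsA \<alpha> + 1) 1) | a. epsA a = 0}"
  unfolding M2_eq L_alpha_1_def qtangent_def by (auto simp: ac_simps)

end

theorem proposition2p5:
  fixes smH :: "complex \<Rightarrow> 'h::ring_1 \<Rightarrow> 'h" and copH :: "'h \<Rightarrow> ('h \<times> 'h) list"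
    and epsH :: "'h \<Rightarrow> complex" and SH :: "'h \<Rightarrow> 'h"
    and smA :: "complex \<Rightarrow> 'a::ring_1 \<Rightarrow> 'a" and copA :: "'a \<Rightarrow> ('a \<times> 'a) list"
    and epsA :: "'a \<Rightarrow> complex" and SA :: "'a \<Rightarrow> 'a"
    and pr :: "'h \<Rightarrow> 'a \<Rightarrow> complex" and \<alpha> :: 'a
  assumes "hopf_alg smH copH epsH SH"
    and "hopf_alg smA copA epsA SA"
    and "hopf_pairing smH copH epsH smA copA epsA pr"
    and "\<forall>c. \<alpha> \<noteq> smA c 1"
    and "teq2 smA smA (adcoact copA SA \<alpha>) [(1, \<alpha>)]"
  shows "double_stable smH copH SH pr (L_alpha smH copH epsH epsA pr \<alpha>)
       \<and> double_stable smH copH SH pr (L_alpha_tilde epsH epsA pr \<alpha>)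
       \<and> double_stable smH copH SH pr (L_alpha_1 epsH epsA pr \<alpha>)
       \<and> bicov_quot smA copA epsA SA {a * \<alpha> - smA (epsA \<alpha>) a | a. True}
       \<and> L_alpha smH copH epsH epsA pr \<alpha>
           = qtangent epsH pr {a * \<alpha> - smA (epsA \<alpha>) a | a. True}
       \<and> bicov_quot smA copA epsA SA {a * (\<alpha> - smA (epsA \<alpha> + 1) 1) | a. epsA a = 0}
       \<and> L_alpha_1 epsH epsA pr \<alpha>
           = qtangent epsH pr {a * (\<alpha> - smA (epsA \<alpha> + 1) 1) | a. epsA a = 0}"
proof -
  note ax = assms
  have pH: "hopf_pairing smH copH epsH smA copA epsA pr" by (rule assms(3))
  interpret hp smH copH epsH SH smA copA epsA SA pr
  proof (unfold_locales)
    show "hopf_alg smH copH epsH SH" by (rule assms(1))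
    show "hopf_alg smA copA epsA SA" by (rule assms(2))
    show "hopf_pairing smH copH epsH smA copA epsA pr" by (rule pH)
    show "lin_fun smH (\<lambda>h. pr h i)" for i using pH by (simp add: hopf_pairing_def bilin_def)
    show "lin_fun smA (pr i)" for i using pH by (simp add: hopf_pairing_def bilin_def)
    show "x = 0" if "\<And>i. pr x i = 0" for x using pH that by (simp add: hopf_pairing_def)
    show "x = 0" if "\<And>i. pr i x = 0" for x using pH that by (simp add: hopf_pairing_def)
  qed
  have inv: "teq2 smA smA (adcoact copA SA \<alpha>) [(1, \<alpha>)]" by (rule assms(5))
  have b1: "bicov_quot smA copA epsA SA {a * \<alpha> - smA (epsA \<alpha>) a | a. True}"
    by (rule A.bicov_all[OF inv])
  have b2: "bicov_quot smA copA epsA SA {a * (\<alpha> - smA (epsA \<alpha> + 1) 1) | a. epsA a = 0}"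
    unfolding M2_eq by (rule A.bicov_ker[OF inv])
  have b3: "bicov_quot smA copA epsA SA {a * \<alpha> - smA (epsA \<alpha>) a | a. epsA a = 0}"
    by (rule A.bicov_ker[OF inv])
  show ?thesis
    using stable[OF b1] stable[OF b2] stable[OF b3] b1 b2
    by (simp add: L_alpha_eq L_tilde_eq L_1_eq)
qed

end
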